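(* Let $(\mathcal N,\mathcal E)$ be a connected undirected graph on $\mathcal N=\{1,\dots,n\}$ and $W$ a symmetric stochastic matrix with $w_{ij}=0$ for $i\ne j$, $(i,j)\notin\mathcal E$, $w_{ii}>1/2$ for all $i$, and $w_{ij}$ rational in $(0,1)$ for $(i,j)\in\mathcal E$. Let $\mathbb N(t)=(\mathcal N,\mathcal E(t))$, $\mathcal E(t)\subseteq\mathcal E$, be random undirected graphs with $\Pr[(i,j)\in\mathcal E(t)\mid\sigma(\mathbb N(1),\dots,\mathbb N(t-1))]\ge p$ for all $t$, all $(i,j)\in\mathcal E$, for a constant $p>0$; define $w_{ij}(t)=w_{ij}$ if $(i,j)\in\mathcal E(t)$, $0$ otherwise ($i\ne j$), and $w_{ii}(t)=1-\sum_{j\ne i}w_{ij}(t)$. For each $i$ let $x_i(1),x_i(2),\dots$ be i.i.d. samples of $X_i$ with $|X_i|\le K$, $\bar x_i=E[X_i]$, $z_i(t)=\frac1t\sum_{\tau\le t}x_i(\tau)$. Fix $\Delta>0$, let $\mathcal B=\{k\Delta+\Delta/2:k=0,1,\dots\}$, $\mathcal R(x)$ the multiple $k\Delta$ ($k=0,1,\dots$) nearest to $x$ with $\mathcal R(k\Delta+\Delta/2)=(k+1)\Delta$, $\tilde z_i(t)=\mathcal R(z_i(t))$, $\Delta\tilde z(t+1)=\tilde z(t+1)-\tilde z(t)$. Let $\mathcal Q$ be the element-wise truncation, ceiling, or rounding-to-integer quantizer and let $$y(t+1)=W(t)\mathcal Q(y(t))+y(t)-\mathcal Q(y(t))+\Delta\tilde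 z(t+1),\qquad t=1,2,\dots.$$ If $\bar x_i\notin\mathcal B$ for all $i$, then almost surely there is a finite set containing $y_i(t)$ for all $t\in\{1,2,\dots\}$ and all $i\in\mathcal N$. *)

theory Defs
  imports "HOL-Probability.Probability"
begin

definition undirected_graph :: "nat \<Rightarrow> (nat \<times> nat) set \<Rightarrow> bool" where
  "undirected_graph n E \<longleftrightarrow> E \<subseteq> {1..n} \<times> {1..n} \<and> (\<forall>i j. (i,j) \<in> E \<longrightarrow> (j,i) \<in> E)
     \<and> (\<forall>i. (i,i) \<notin> E)"

definition connected_graph :: "nat \<Rightarrow> (nat \<times> nat) set \<Rightarrow> bool" where
  "connected_graph n E \<longleftrightarrow> (\<forall>i\<in>{1..n}. \<forall>j\<in>{1..n}. (i,j) \<in> E\<^sup>*)"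

definition Wt :: "nat \<Rightarrow> (nat \<Rightarrow> nat \<Rightarrow> real) \<Rightarrow> (nat \<times> nat) set \<Rightarrow> nat \<Rightarrow> nat \<Rightarrow> real" where
  "Wt n W Et i j =
     (if i = j then 1 - (\<Sum>k\<in>{1..n} - {i}. (if (i,k) \<in> Et then W i k else 0))
      else if (i,j) \<in> Et then W i j else 0)"

text \<open>\<open>\<R>(x)\<close>: the multiple \<open>k\<Delta>\<close>, \<open>k = 0,1,\<dots>\<close>, nearest to \<open>x\<close>, ties
  \<open>k\<Delta>+\<Delta>/2\<close> resolved upwards to \<open>(k+1)\<Delta>\<close>.\<close>
definition Rnd :: "real \<Rightarrow> real \<Rightarrow> real" where
  "Rnd \<Delta> x = \<Delta> * of_int (max 0 \<lfloor>x / \<Delta> + 1/2\<rfloor>)"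

definition Bset :: "real \<Rightarrow> real set" where
  "Bset \<Delta> = {real k * \<Delta> + \<Delta> / 2 | k::nat. True}"

definition zavg :: "(nat \<Rightarrow> 'a \<Rightarrow> real) \<Rightarrow> nat \<Rightarrow> 'a \<Rightarrow> real" where
  "zavg xi t \<omega> = (1 / real t) * (\<Sum>\<tau>\<in>{1..t}. xi \<tau> \<omega>)"

end

theory Submission
  imports Defs
begin

lemma avg_conc:
  fixes M :: "'a measure" and X :: "nat \<Rightarrow> 'a \<Rightarrow> real"
  assumes prob: "prob_space M"
    and rv: "\<forall>\<tau>\<ge>1. X \<tau> \<in> borel_measurable M"
    and indep: "prob_space.indep_vars M (\<lambda>_. borel) X {1..}"
    and ident: "\<forall>\<tau>\<ge>1. distr M borel (X \<tau>) = distr M borel (X 1)"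
    and bdd: "\<forall>\<tau>\<ge>1. \<forall>\<omega>\<in>space M. \<bar>X \<tau> \<omega>\<bar> \<le> K"
    and eps: "\<epsilon> > 0"
  shows "AE \<omega> in M. eventually (\<lambda>t. \<bar>zavg X t \<omega> - prob_space.expectation M (X 1)\<bar> < \<epsilon>) sequentially"
proof -
  interpret prob_space M by (rule prob)
  define \<mu> where "\<mu> = expectation (X 1)"
  define c where "c = \<bar>K\<bar> + 1"
  have c: "c > 0" unfolding c_def by simp
  define A where "A t = {\<omega>\<in>space M. \<bar>(\<Sum>\<tau>\<in>{1..Suc t}. X \<tau> \<omega>) / real (card {1..Suc t}) - \<mu>\<bar> \<ge> \<epsilon>}" for t
  define r where "r = exp (-2 * \<epsilon>\<^sup>2 / (c - - c)\<^sup>2)"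
  have bnd: "measure M (A t) \<le> 2 * r ^ Suc t" for t
  proof -
    interpret H: Hoeffding_ineq_iid M "{1..Suc t}" X "X 1" "-c" c \<mu>
    proof unfold_locales
      show "indep_vars (\<lambda>_. borel) X {1..Suc t}"
        by (rule indep_vars_subset[OF indep]) auto
      show "distr M borel (X i) = distr M borel (X 1)" if "i \<in> {1..Suc t}" for i
        using ident that by (metis atLeastAtMost_iff)
      show "X 1 \<in> borel_measurable M" using rv by blast
      show "AE x in M. X 1 x \<in> {- c..c}"
        using bdd unfolding c_def by (intro AE_I2) force
    qed (simp_all add: \<mu>_def)
    have "measure M (A t) \<le> 2 * exp (-2 * real (card {1..Suc t}) * \<epsilon>\<^sup>2 / (c - - c)\<^sup>2)"
      unfolding A_def by (rule H.Hoeffding_ineq_abs_ge') (use eps c in auto)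
    also have "\<dots> = 2 * exp (real (Suc t) * (-2 * \<epsilon>\<^sup>2 / (c - - c)\<^sup>2))"
      using c by (simp add: field_simps)
    also have "\<dots> = 2 * r ^ Suc t" unfolding r_def by (simp only: exp_of_nat_mult)
    finally show ?thesis .
  qed
  have r1: "r < 1" unfolding r_def using eps c by simp
  have r0: "r > 0" unfolding r_def by simp
  have sA: "summable (\<lambda>t. measure M (A t))"
  proof (rule summable_comparison_test)
    show "\<exists>N. \<forall>t\<ge>N. norm (measure M (A t)) \<le> 2 * r ^ Suc t" using bnd by auto
    show "summable (\<lambda>t. 2 * r ^ Suc t)"
      using r0 r1 by (intro summable_mult summable_Suc_iff[THEN iffD2] summable_geometric) auto
  qed
  have Am: "A t \<in> sets M" for t
  proof -
    have "(\<lambda>\<omega>. (\<Sum>\<tau>\<in>{1..Suc t}. X \<tau> \<omega>)) \<in> borel_measurable M"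
      using rv by (intro borel_measurable_sum) auto
    then show ?thesis unfolding A_def by measurable
  qed
  have "AE x in M. eventually (\<lambda>t. x \<in> space M - A t) sequentially"
    by (rule borel_cantelli_AE1) (use Am sA in \<open>auto simp: less_top[symmetric]\<close>)
  then show ?thesis
  proof (rule AE_mp, intro AE_I2 impI)
    fix \<omega> assume "\<omega> \<in> space M" and ev: "eventually (\<lambda>t. \<omega> \<in> space M - A t) sequentially"
    have "eventually (\<lambda>t. \<bar>zavg X (Suc t) \<omega> - \<mu>\<bar> < \<epsilon>) sequentially"
      using ev by eventually_elim (auto simp: A_def zavg_def \<open>\<omega> \<in> space M\<close>)
    then have "eventually (\<lambda>t. \<bar>zavg X t \<omega> - \<mu>\<bar> < \<epsilon>) sequentially"
      using eventually_sequentially_Suc[of "\<lambda>t. \<bar>zavg X t \<omega> - \<mu>\<bar> < \<epsilon>"] by blast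
    then show "eventually (\<lambda>t. \<bar>zavg X t \<omega> - expectation (X 1)\<bar> < \<epsilon>) sequentially"
      unfolding \<mu>_def .
  qed
qed


lemma Rnd_locconst:
  assumes D: "\<Delta> > 0" and nb: "\<mu> \<notin> Bset \<Delta>"
  shows "\<exists>\<epsilon>>0. \<forall>x. \<bar>x - \<mu>\<bar> < \<epsilon> \<longrightarrow> Rnd \<Delta> x = Rnd \<Delta> \<mu>"
proof (cases "\<mu> < 0")
  case True
  have z: "Rnd \<Delta> x = 0" if "x < 0" for x
  proof -
    have "x / \<Delta> < 0" using that D by (simp add: divide_neg_pos)
    then have "\<lfloor>x / \<Delta> + 1/2\<rfloor> \<le> 0" by linarith
    then show ?thesis unfolding Rnd_def by simp
  qed
  show ?thesis
    by (rule exI[of _ "-\<mu>"]) (use True z in auto)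
next
  case False
  define v where "v = \<mu> / \<Delta> + 1/2"
  have v12: "v \<ge> 1/2" unfolding v_def using False D by simp
  have nint: "v \<notin> \<int>"
  proof
    assume "v \<in> \<int>"
    then obtain k where k: "v = of_int k" by (auto elim: Ints_cases)
    with v12 have k1: "k \<ge> 1" by simp
    have "\<mu> = real (nat (k - 1)) * \<Delta> + \<Delta> / 2"
      using k k1 D unfolding v_def by (simp add: field_simps)
    then have "\<mu> \<in> Bset \<Delta>" unfolding Bset_def by blast
    with nb show False by simp
  qed
  define f where "f = \<lfloor>v\<rfloor>"
  have f1: "of_int f < v" using nint unfolding f_def
    by (metis Ints_of_int floor_less_iff less_eq_real_def of_int_floor_le)
  have f2: "v < of_int f + 1" unfolding f_def by linarith
  define d where "d = min (v - of_int f) (of_int f + 1 - v)"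
  have d: "d > 0" unfolding d_def using f1 f2 by simp
  show ?thesis
  proof (intro exI[of _ "\<Delta> * d"] conjI allI impI)
    show "\<Delta> * d > 0" using D d by simp
    fix x assume "\<bar>x - \<mu>\<bar> < \<Delta> * d"
    then have "\<bar>x / \<Delta> - \<mu> / \<Delta>\<bar> < d" using D
      by (simp add: diff_divide_distrib[symmetric] abs_divide pos_divide_less_eq mult.commute)
    then have "\<bar>(x / \<Delta> + 1/2) - v\<bar> < d" unfolding v_def by simp
    then have "\<lfloor>x / \<Delta> + 1/2\<rfloor> = f" unfolding d_def by (intro floor_unique) auto
    moreover have "\<lfloor>\<mu> / \<Delta> + 1/2\<rfloor> = f" unfolding f_def v_def ..
    ultimately show "Rnd \<Delta> x = Rnd \<Delta> \<mu>" unfolding Rnd_def by simp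
  qed
qed

lemma Q_props:
  fixes Q :: "real \<Rightarrow> real" and a b :: int
  assumes Qc: "Q = (\<lambda>x. of_int \<lfloor>x\<rfloor>) \<or> Q = (\<lambda>x. of_int \<lceil>x\<rceil>) \<or> Q = (\<lambda>x. of_int (round x))"
  shows "Q x \<in> \<int>" and "\<bar>x - Q x\<bar> \<le> 1"
    and "of_int a \<le> c \<Longrightarrow> c \<le> of_int b \<Longrightarrow> of_int a \<le> Q (c + y - Q y) \<and> Q (c + y - Q y) \<le> of_int b"
proof -
  show "Q x \<in> \<int>" using Qc by auto
  show "\<bar>x - Q x\<bar> \<le> 1" using Qc
    by (auto simp: round_def) linarith+
next
  assume a: "of_int a \<le> c" and b: "c \<le> of_int b"
  have hf: "(of_int a :: real) \<le> of_int \<lfloor>z\<rfloor> \<and> of_int \<lfloor>z\<rfloor> \<le> (of_int b :: real)" if "of_int a \<le> z" "z < of_int b + 1" for z :: real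
  proof -
    have "a \<le> \<lfloor>z\<rfloor>" using that(1) by (simp add: le_floor_iff)
    moreover have "\<lfloor>z\<rfloor> \<le> b" using that(2) by (simp add: floor_le_iff)
    ultimately show ?thesis by simp
  qed
  have hc: "(of_int a :: real) \<le> of_int \<lceil>z\<rceil> \<and> of_int \<lceil>z\<rceil> \<le> (of_int b :: real)" if "of_int a - 1 < z" "z \<le> of_int b" for z :: real
  proof -
    have "a \<le> \<lceil>z\<rceil>" using that(1) by (simp add: le_ceiling_iff)
    moreover have "\<lceil>z\<rceil> \<le> b" using that(2) by (simp add: ceiling_le_iff)
    ultimately show ?thesis by simp
  qed
  from Qc show "of_int a \<le> Q (c + y - Q y) \<and> Q (c + y - Q y) \<le> of_int b"
  proof (elim disjE)
    assume Q: "Q = (\<lambda>x. of_int \<lfloor>x\<rfloor>)"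
    show ?thesis unfolding Q by (rule hf) (use a b in linarith)+
  next
    assume Q: "Q = (\<lambda>x. of_int \<lceil>x\<rceil>)"
    show ?thesis unfolding Q by (rule hc) (use a b in linarith)+
  next
    assume Q: "Q = (\<lambda>x. of_int (round x))"
    have r: "of_int (round x) = of_int \<lfloor>x + 1/2\<rfloor>" for x :: real unfolding round_def ..
    show ?thesis unfolding Q r by (rule hf) (use a b in linarith)+
  qed
qed


lemma det_bound:
  fixes Q :: "real \<Rightarrow> real" and Y :: "nat \<Rightarrow> nat \<Rightarrow> real" and w :: "nat \<Rightarrow> nat \<Rightarrow> nat \<Rightarrow> real"
    and D :: nat
  assumes Qc: "Q = (\<lambda>x. of_int \<lfloor>x\<rfloor>) \<or> Q = (\<lambda>x. of_int \<lceil>x\<rceil>) \<or> Q = (\<lambda>x. of_int (round x))"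
    and rec: "\<forall>t\<ge>T. \<forall>i\<in>{1..n}. Y (t+1) i = (\<Sum>j\<in>{1..n}. w t i j * Q (Y t j)) + Y t i - Q (Y t i)"
    and wnn: "\<forall>t\<ge>T. \<forall>i\<in>{1..n}. \<forall>j\<in>{1..n}. w t i j \<ge> 0"
    and wsum: "\<forall>t\<ge>T. \<forall>i\<in>{1..n}. (\<Sum>j\<in>{1..n}. w t i j) = 1"
    and wD: "\<forall>t\<ge>T. \<forall>i\<in>{1..n}. \<forall>j\<in>{1..n}. real D * w t i j \<in> \<int>"
    and Dpos: "D > 0"
  shows "\<exists>S. finite S \<and> (\<forall>t\<ge>T. \<forall>i\<in>{1..n}. Y t i \<in> S)"
proof -
  define B0 where "B0 = (\<Sum>j\<in>{1..n}. \<bar>Q (Y T j)\<bar>)"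
  define b where "b = \<lceil>B0\<rceil>"
  define a where "a = - b"
  have inv: "\<forall>i\<in>{1..n}. of_int a \<le> Q (Y t i) \<and> Q (Y t i) \<le> of_int b" if "t \<ge> T" for t
    using that
  proof (induction t rule: dec_induct)
    case base
    show ?case
    proof
      fix i assume i: "i \<in> {1..n}"
      have "\<bar>Q (Y T i)\<bar> \<le> B0" unfolding B0_def
        by (rule member_le_sum) (use i in auto)
      then show "of_int a \<le> Q (Y T i) \<and> Q (Y T i) \<le> of_int b"
        unfolding a_def b_def by linarith
    qed
  next
    case (step t)
    show ?case
    proof
      fix i assume i: "i \<in> {1..n}"
      define c where "c = (\<Sum>j\<in>{1..n}. w t i j * Q (Y t j))"
      have "(\<Sum>j\<in>{1..n}. w t i j * of_int a) \<le> c" unfolding c_def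
        by (rule sum_mono) (use step.IH wnn step.hyps i in \<open>auto intro: mult_left_mono\<close>)
      moreover have "(\<Sum>j\<in>{1..n}. w t i j * of_int a) = of_int a"
        using wsum step.hyps i by (simp add: sum_distrib_right[symmetric])
      ultimately have ca: "of_int a \<le> c" by simp
      have "c \<le> (\<Sum>j\<in>{1..n}. w t i j * of_int b)" unfolding c_def
        by (rule sum_mono) (use step.IH wnn step.hyps i in \<open>auto intro: mult_left_mono\<close>)
      moreover have "(\<Sum>j\<in>{1..n}. w t i j * of_int b) = of_int b"
        using wsum step.hyps i by (simp add: sum_distrib_right[symmetric])
      ultimately have cb: "c \<le> of_int b" by simp
      have "Y (Suc t) i = c + Y t i - Q (Y t i)" using rec step.hyps i unfolding c_def by simp
      then show "of_int a \<le> Q (Y (Suc t) i) \<and> Q (Y (Suc t) i) \<le> of_int b"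
        using Q_props(3)[OF Qc ca cb] by simp
    qed
  qed
  define R2 where "R2 = 2 * real_of_int b - 2 * real_of_int a + 2"
  have bnd: "\<bar>Y t i - Y T i\<bar> \<le> R2" if "t \<ge> T" "i \<in> {1..n}" for t i
  proof -
    have "\<bar>Y t i - Q (Y t i)\<bar> \<le> 1" "\<bar>Y T i - Q (Y T i)\<bar> \<le> 1" by (rule Q_props(2)[OF Qc])+
    moreover have "of_int a \<le> Q (Y t i) \<and> Q (Y t i) \<le> of_int b" using inv that by blast
    moreover have "of_int a \<le> Q (Y T i) \<and> Q (Y T i) \<le> of_int b" using inv that by blast
    ultimately have "Y t i - Y T i \<le> R2" "Y T i - Y t i \<le> R2" unfolding R2_def by linarith+
    then show ?thesis by linarith
  qed
  have lat: "\<forall>i\<in>{1..n}. real D * (Y t i - Y T i) \<in> \<int>" if "t \<ge> T" for t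
    using that
  proof (induction t rule: dec_induct)
    case base
    then show ?case by simp
  next
    case (step t)
    show ?case
    proof
      fix i assume i: "i \<in> {1..n}"
      have "real D * (Y (Suc t) i - Y T i) = real D * (Y t i - Y T i)
          + (\<Sum>j\<in>{1..n}. (real D * w t i j) * Q (Y t j)) - real D * Q (Y t i)"
      proof -
        have e: "Y (Suc t) i = (\<Sum>j\<in>{1..n}. w t i j * Q (Y t j)) + Y t i - Q (Y t i)"
          using rec step.hyps i by simp
        have s: "real D * (\<Sum>j\<in>{1..n}. w t i j * Q (Y t j)) = (\<Sum>j\<in>{1..n}. (real D * w t i j) * Q (Y t j))"
          by (simp add: sum_distrib_left mult.assoc)
        show ?thesis unfolding e s[symmetric] by (simp add: algebra_simps)
      qed
      also have "\<dots> \<in> \<int>"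
      proof -
        have h1: "real D * (Y t i - Y T i) \<in> \<int>" using step.IH i by blast
        have h2: "(\<Sum>j\<in>{1..n}. (real D * w t i j) * Q (Y t j)) \<in> \<int>"
          by (rule Ints_sum, rule Ints_mult) (use i wD step.hyps Q_props(1)[OF Qc] in auto)
        have h3: "real D * Q (Y t i) \<in> \<int>" using Q_props(1)[OF Qc] by (intro Ints_mult) auto
        show ?thesis using h1 h2 h3 by (intro Ints_diff Ints_add)
      qed
      finally show "real D * (Y (Suc t) i - Y T i) \<in> \<int>" .
    qed
  qed
  define N where "N = \<lceil>real D * R2\<rceil>"
  define S where "S = (\<Union>i\<in>{1..n}. (\<lambda>k. Y T i + of_int k / real D) ` {-N..N})"
  show ?thesis
  proof (intro exI[of _ S] conjI allI impI ballI)
    show "finite S" unfolding S_def by auto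
    fix t i assume t: "t \<ge> T" and i: "i \<in> {1..n}"
    obtain k where k: "real D * (Y t i - Y T i) = of_int k"
    proof -
      have "real D * (Y t i - Y T i) \<in> \<int>" using lat[OF t] i by blast
      then show ?thesis using that by (auto elim: Ints_cases)
    qed
    have "\<bar>of_int k\<bar> \<le> real D * R2"
      using bnd[OF t i] Dpos unfolding k[symmetric] by (simp add: abs_mult)
    then have "k \<in> {-N..N}" unfolding N_def by (simp add: abs_le_iff) linarith
    moreover have "Y t i = Y T i + of_int k / real D" using k Dpos by (simp add: field_simps)
    ultimately show "Y t i \<in> S" unfolding S_def using i by blast
  qed
qed


lemma common_denom:
  fixes F :: "real set"
  assumes "finite F" "F \<subseteq> \<rat>"
  shows "\<exists>D::nat. D > 0 \<and> (\<forall>q\<in>F. real D * q \<in> \<int>)"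
  using assms
proof (induction F rule: finite_induct)
  case empty
  show ?case by (rule exI[of _ 1]) simp
next
  case (insert q F)
  then obtain D :: nat where D: "D > 0" "\<forall>q\<in>F. real D * q \<in> \<int>" by auto
  from insert.prems have "q \<in> \<rat>" by auto
  then obtain a b where ab: "b > 0" "q = of_int a / of_int b" by (rule Rats_cases')
  define D' where "D' = D * nat b"
  show ?case
  proof (intro exI[of _ D'] conjI ballI)
    show "D' > 0" unfolding D'_def using D ab by simp
    fix r assume "r \<in> insert q F"
    then show "real D' * r \<in> \<int>"
    proof
      assume "r = q"
      then have "real D' * r = of_int (int D * a)" unfolding D'_def using ab by simp
      then show ?thesis by simp
    next
      assume "r \<in> F"
      then have "real D * r \<in> \<int>" using D by blast
      moreover have Db: "real D' = real D * of_int b" unfolding D'_def using ab(1) by (simp add: of_nat_nat)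
      ultimately show ?thesis by (simp add: mult.assoc[symmetric]) (metis Ints_mult Ints_of_int mult.commute mult.left_commute)
    qed
  qed
qed

lemma Wt_off: "j \<noteq> i \<Longrightarrow> Wt n W Et i j = (if (i,j) \<in> Et then W i j else 0)"
  unfolding Wt_def by simp

lemma Wt_props:
  assumes Et: "Et \<subseteq> E" and E: "E \<subseteq> {1..n} \<times> {1..n}"
    and W_nonneg: "\<forall>i\<in>{1..n}. \<forall>j\<in>{1..n}. W i j \<ge> 0"
    and W_stoch: "\<forall>i\<in>{1..n}. (\<Sum>j\<in>{1..n}. W i j) = 1"
    and i: "i \<in> {1..n}"
  shows "(\<Sum>j\<in>{1..n}. Wt n W Et i j) = 1"
    and "j \<in> {1..n} \<Longrightarrow> Wt n W Et i j \<ge> 0"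
    and "\<forall>(i,j)\<in>E. real D * W i j \<in> \<int> \<Longrightarrow> real D * Wt n W Et i j \<in> \<int>"
proof -
  define s where "s = (\<Sum>k\<in>{1..n} - {i}. (if (i,k) \<in> Et then W i k else 0))"
  have dg: "Wt n W Et i i = 1 - s" unfolding Wt_def s_def by simp
  have "(\<Sum>j\<in>{1..n}. Wt n W Et i j) = Wt n W Et i i + (\<Sum>j\<in>{1..n} - {i}. Wt n W Et i j)"
    using i by (simp add: sum.remove)
  also have "(\<Sum>j\<in>{1..n} - {i}. Wt n W Et i j) = s"
    unfolding s_def by (rule sum.cong) (auto simp: Wt_off)
  finally show "(\<Sum>j\<in>{1..n}. Wt n W Et i j) = 1" using dg by simp
  have "s \<le> (\<Sum>k\<in>{1..n} - {i}. W i k)"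
    unfolding s_def by (rule sum_mono) (use W_nonneg i in auto)
  also have "(\<Sum>k\<in>{1..n} - {i}. W i k) = 1 - W i i"
  proof -
    have "W i i + (\<Sum>k\<in>{1..n} - {i}. W i k) = 1" using W_stoch i by (simp add: sum.remove)
    then show ?thesis by linarith
  qed
  moreover have "W i i \<ge> 0" using W_nonneg i by blast
  ultimately have "s \<le> 1" by linarith
  then have d0: "Wt n W Et i i \<ge> 0" using dg by simp
  show "Wt n W Et i j \<ge> 0" if j: "j \<in> {1..n}"
  proof (cases "j = i")
    case True then show ?thesis using d0 by simp
  next
    case False then show ?thesis using W_nonneg i j by (simp add: Wt_off)
  qed
  assume WD: "\<forall>(i,j)\<in>E. real D * W i j \<in> \<int>"
  have t: "real D * (if (i,k) \<in> Et then W i k else 0) \<in> \<int>" for k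
    using WD Et by auto
  show "real D * Wt n W Et i j \<in> \<int>"
  proof (cases "j = i")
    case True
    have "real D * Wt n W Et i j = real D * (1 - s)" using True dg by simp
    also have "\<dots> = real D - (\<Sum>k\<in>{1..n} - {i}. real D * (if (i,k) \<in> Et then W i k else 0))"
      unfolding s_def by (simp add: right_diff_distrib sum_distrib_left)
    also have "\<dots> \<in> \<int>" using t by (intro Ints_diff Ints_sum) auto
    finally show ?thesis .
  next
    case False then show ?thesis using t by (simp add: Wt_off)
  qed
qed

theorem lemma4:
  fixes M :: "'a measure"
    and n :: nat and E :: "(nat \<times> nat) set" and W :: "nat \<Rightarrow> nat \<Rightarrow> real"
    and Ed :: "nat \<Rightarrow> 'a \<Rightarrow> (nat \<times> nat) set" and p :: real
    and xs :: "nat \<Rightarrow> nat \<Rightarrow> 'a \<Rightarrow> real" and K :: real and \<Delta> :: real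
    and Q :: "real \<Rightarrow> real" and y :: "nat \<Rightarrow> 'a \<Rightarrow> nat \<Rightarrow> real"
  assumes prob: "prob_space M"
    and graph: "undirected_graph n E" and conn: "connected_graph n E"
    and W_sym: "\<forall>i\<in>{1..n}. \<forall>j\<in>{1..n}. W i j = W j i"
    and W_nonneg: "\<forall>i\<in>{1..n}. \<forall>j\<in>{1..n}. W i j \<ge> 0"
    and W_stoch: "\<forall>i\<in>{1..n}. (\<Sum>j\<in>{1..n}. W i j) = 1"
    and W_zero: "\<forall>i\<in>{1..n}. \<forall>j\<in>{1..n}. i \<noteq> j \<and> (i,j) \<notin> E \<longrightarrow> W i j = 0"
    and W_diag: "\<forall>i\<in>{1..n}. W i i > 1/2"
    and W_edge: "\<forall>(i,j)\<in>E. W i j \<in> \<rat> \<and> 0 < W i j \<and> W i j < 1"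
    and Ed_sub: "\<forall>t\<ge>1. \<forall>\<omega>\<in>space M. Ed t \<omega> \<subseteq> E \<and> undirected_graph n (Ed t \<omega>)"
    and Ed_meas: "\<forall>t\<ge>1. \<forall>S. {\<omega>\<in>space M. Ed t \<omega> = S} \<in> sets M"
    and p_pos: "p > 0"
    and Ed_prob: "\<forall>t\<ge>1. \<forall>(i,j)\<in>E.
        \<forall>A\<in>sigma_sets (space M) {{\<omega>\<in>space M. Ed s \<omega> = S} | s S. 1 \<le> s \<and> s < t}.
          measure M (A \<inter> {\<omega>\<in>space M. (i,j) \<in> Ed t \<omega>}) \<ge> p * measure M A"
    and xs_rv: "\<forall>i\<in>{1..n}. \<forall>\<tau>\<ge>1. xs i \<tau> \<in> borel_measurable M"
    and xs_indep: "\<forall>i\<in>{1..n}. prob_space.indep_vars M (\<lambda>_. borel) (xs i) {1..}"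
    and xs_ident: "\<forall>i\<in>{1..n}. \<forall>\<tau>\<ge>1. distr M borel (xs i \<tau>) = distr M borel (xs i 1)"
    and xs_bdd: "\<forall>i\<in>{1..n}. \<forall>\<tau>\<ge>1. \<forall>\<omega>\<in>space M. \<bar>xs i \<tau> \<omega>\<bar> \<le> K"
    and Delta_pos: "\<Delta> > 0"
    and Q_cases: "Q = (\<lambda>x. of_int \<lfloor>x\<rfloor>) \<or> Q = (\<lambda>x. of_int \<lceil>x\<rceil>) \<or> Q = (\<lambda>x. of_int (round x))"
    and y_rec: "\<forall>\<omega>\<in>space M. \<forall>t\<ge>1. \<forall>i\<in>{1..n}.
        y (t+1) \<omega> i = (\<Sum>j\<in>{1..n}. Wt n W (Ed t \<omega>) i j * Q (y t \<omega> j))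
                        + y t \<omega> i - Q (y t \<omega> i)
                        + (Rnd \<Delta> (zavg (xs i) (t+1) \<omega>) - Rnd \<Delta> (zavg (xs i) t \<omega>))"
    and mean_notB: "\<forall>i\<in>{1..n}. prob_space.expectation M (xs i 1) \<notin> Bset \<Delta>"
  shows "AE \<omega> in M. \<exists>S::real set. finite S \<and> (\<forall>t\<ge>1. \<forall>i\<in>{1..n}. y t \<omega> i \<in> S)"
proof -
  interpret prob_space M by (rule prob)
  have Esub: "E \<subseteq> {1..n} \<times> {1..n}" using graph unfolding undirected_graph_def by blast
  have finE: "finite E" by (rule finite_subset[OF Esub]) auto
  have "(\<lambda>(i,j). W i j) ` E \<subseteq> \<rat>" using W_edge by auto
  then obtain D :: nat where D: "D > 0" "\<forall>q\<in>(\<lambda>(i,j). W i j) ` E. real D * q \<in> \<int>"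
    using common_denom[of "(\<lambda>(i,j). W i j) ` E"] finE by blast
  have WD: "\<forall>(i,j)\<in>E. real D * W i j \<in> \<int>" using D(2) by auto
  define c where "c i = Rnd \<Delta> (expectation (xs i 1))" for i
  have ae1: "\<forall>i\<in>{1..n}. AE \<omega> in M. eventually (\<lambda>t. Rnd \<Delta> (zavg (xs i) t \<omega>) = c i) sequentially"
  proof
    fix i assume i: "i \<in> {1..n}"
    obtain \<epsilon> where eps: "\<epsilon> > 0" "\<forall>x. \<bar>x - expectation (xs i 1)\<bar> < \<epsilon> \<longrightarrow> Rnd \<Delta> x = c i"
      using Rnd_locconst[OF Delta_pos] mean_notB i unfolding c_def by blast
    have "AE \<omega> in M. eventually (\<lambda>t. \<bar>zavg (xs i) t \<omega> - expectation (xs i 1)\<bar> < \<epsilon>) sequentially"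
    proof (rule avg_conc[OF prob _ _ _ _ eps(1)])
      show "\<forall>\<tau>\<ge>1. xs i \<tau> \<in> borel_measurable M" using xs_rv i by blast
      show "indep_vars (\<lambda>_. borel) (xs i) {1..}" using xs_indep i by blast
      show "\<forall>\<tau>\<ge>1. distr M borel (xs i \<tau>) = distr M borel (xs i 1)" using xs_ident i by blast
      show "\<forall>\<tau>\<ge>1. \<forall>\<omega>\<in>space M. \<bar>xs i \<tau> \<omega>\<bar> \<le> K" using xs_bdd i by blast
    qed
    then show "AE \<omega> in M. eventually (\<lambda>t. Rnd \<Delta> (zavg (xs i) t \<omega>) = c i) sequentially"
      by (rule AE_mp) (intro AE_I2 impI, elim eventually_mono, use eps(2) in blast)
  qed
  have "AE \<omega> in M. \<forall>i\<in>{1..n}. eventually (\<lambda>t. Rnd \<Delta> (zavg (xs i) t \<omega>) = c i) sequentially"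
    using eventually_ball_finite[OF _ ae1] by simp
  then show ?thesis
  proof (rule AE_mp, intro AE_I2 impI)
    fix \<omega> assume \<omega>: "\<omega> \<in> space M"
      and ev: "\<forall>i\<in>{1..n}. eventually (\<lambda>t. Rnd \<Delta> (zavg (xs i) t \<omega>) = c i) sequentially"
    have "eventually (\<lambda>t. \<forall>i\<in>{1..n}. Rnd \<Delta> (zavg (xs i) t \<omega>) = c i) sequentially"
      using eventually_ball_finite[OF _ ev] by simp
    then obtain T0 where T0: "\<forall>t\<ge>T0. \<forall>i\<in>{1..n}. Rnd \<Delta> (zavg (xs i) t \<omega>) = c i"
      unfolding eventually_sequentially by blast
    define T where "T = max T0 1"
    have T1: "T \<ge> 1" unfolding T_def by simp
    have rec: "\<forall>t\<ge>T. \<forall>i\<in>{1..n}. y (t+1) \<omega> i = (\<Sum>j\<in>{1..n}. Wt n W (Ed t \<omega>) i j * Q (y t \<omega> j)) + y t \<omega> i - Q (y t \<omega> i)"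
    proof (intro allI impI ballI)
      fix t i assume t: "t \<ge> T" and i: "i \<in> {1..n}"
      have "Rnd \<Delta> (zavg (xs i) (t+1) \<omega>) = c i" "Rnd \<Delta> (zavg (xs i) t \<omega>) = c i"
        using T0 t i unfolding T_def by auto
      then show "y (t+1) \<omega> i = (\<Sum>j\<in>{1..n}. Wt n W (Ed t \<omega>) i j * Q (y t \<omega> j)) + y t \<omega> i - Q (y t \<omega> i)"
        using y_rec \<omega> t T1 i by simp
    qed
    have EtE: "Ed t \<omega> \<subseteq> E" if "t \<ge> T" for t using Ed_sub \<omega> that T1 by auto
    obtain S1 where S1: "finite S1" "\<forall>t\<ge>T. \<forall>i\<in>{1..n}. y t \<omega> i \<in> S1"
    proof (rule exE[OF det_bound[where w = "\<lambda>t. Wt n W (Ed t \<omega>)", OF Q_cases rec _ _ _ D(1)]])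
      show "\<forall>t\<ge>T. \<forall>i\<in>{1..n}. \<forall>j\<in>{1..n}. 0 \<le> Wt n W (Ed t \<omega>) i j"
        using Wt_props(2)[OF EtE Esub W_nonneg W_stoch] by blast
      show "\<forall>t\<ge>T. \<forall>i\<in>{1..n}. (\<Sum>j\<in>{1..n}. Wt n W (Ed t \<omega>) i j) = 1"
        using Wt_props(1)[OF EtE Esub W_nonneg W_stoch] by blast
      show "\<forall>t\<ge>T. \<forall>i\<in>{1..n}. \<forall>j\<in>{1..n}. real D * Wt n W (Ed t \<omega>) i j \<in> \<int>"
        using Wt_props(3)[OF EtE Esub W_nonneg W_stoch _ WD] by blast
    qed (use that in blast)
    define S where "S = S1 \<union> (\<lambda>(t,i). y t \<omega> i) ` ({..T} \<times> {1..n})"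
    show "\<exists>S::real set. finite S \<and> (\<forall>t\<ge>1. \<forall>i\<in>{1..n}. y t \<omega> i \<in> S)"
    proof (intro exI[of _ S] conjI allI impI ballI)
      show "finite S" unfolding S_def using S1(1) by auto
      fix t i :: nat assume "t \<ge> 1" "i \<in> {1..n}"
      show "y t \<omega> i \<in> S"
      proof (cases "t \<ge> T")
        case True then show ?thesis using S1(2) \<open>i \<in> {1..n}\<close> unfolding S_def by blast
      next
        case False
        then have "(t, i) \<in> {..T} \<times> {1..n}" using \<open>i \<in> {1..n}\<close> by auto
        then show ?thesis unfolding S_def by force
      qed
    qed
  qed
qed

end
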